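(* Let $X\subset\mathbb{R}^n$, $n\ge2$, be an open convex bounded domain, let $\alpha\in\mathbb{R}$ with $(n-2)\alpha+1\neq0$, let $\sigma>0$ be a (sufficiently smooth) conductivity on $X$ and let $u_1,\dots,u_n$ be (sufficiently smooth) solutions of $\nabla\cdot(\sigma\nabla u_i)=0$ in $X$. Set $S_i=\sigma^\alpha\nabla u_i$. Let $\Omega\subset X$ be open with $$\inf_{x\in\Omega}\det(S_1(x),\dots,S_n(x))\ge c_0>0.$$ Let $H(x)$ be the $n\times n$ matrix with entries $H_{ij}(x)=S_i(x)\cdot S_j(x)$, $H^{ij}$ the $(i,j)$ entry of $H^{-1}$, and $D(x)=\sqrt{\det H(x)}$. Then at every $x\in\Omega$, $F:=\nabla\log\sigma$ satisfies $$F=\frac{c_F}{D}\sum_{i,j=1}^n\big(\nabla(DH^{ij})\cdot S_i\big)S_j=c_F\Big(\nabla\log D+\sum_{i,j=1}^n(\nabla H^{ij}\cdot S_i)S_j\Big),\qquad c_F:=((n-2)\alpha+1)^{-1}.$$ *)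

theory Defs
  imports "HOL-Analysis.Analysis"
begin

definition partial :: "(real^'n \<Rightarrow> real) \<Rightarrow> 'n \<Rightarrow> real^'n \<Rightarrow> real" where
  "partial f j x = deriv (\<lambda>t. f (x + t *\<^sub>R axis j 1)) 0"

definition grad :: "(real^'n \<Rightarrow> real) \<Rightarrow> real^'n \<Rightarrow> real^'n" where
  "grad f x = (\<chi> j. partial f j x)"

definition divergence :: "(real^'n \<Rightarrow> real^'n) \<Rightarrow> real^'n \<Rightarrow> real" where
  "divergence V x = (\<Sum>j\<in>UNIV. partial (\<lambda>y. V y $ j) j x)"

fun Ck :: "nat \<Rightarrow> (real^'n \<Rightarrow> real) \<Rightarrow> (real^'n) set \<Rightarrow> bool" where
  "Ck 0 f X = continuous_on X f"
| "Ck (Suc k) f X = ((\<forall>x\<in>X. f differentiable (at x)) \<and> (\<forall>j. Ck k (partial f j) X))"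

end

theory Submission
  imports Defs
begin

lemma line_has_deriv:
  fixes f :: "real^'n \<Rightarrow> real"
  assumes "f differentiable (at (z + s0 *\<^sub>R v))"
  shows "((\<lambda>s. f (z + s *\<^sub>R v)) has_real_derivative frechet_derivative f (at (z + s0 *\<^sub>R v)) v) (at s0)"
proof -
  let ?f' = "frechet_derivative f (at (z + s0 *\<^sub>R v))"
  have f: "(f has_derivative ?f') (at (z + s0 *\<^sub>R v))" using assms frechet_derivative_works by blast
  have g: "((\<lambda>s. z + s *\<^sub>R v) has_derivative (\<lambda>h. h *\<^sub>R v)) (at s0)"
    by (auto intro!: derivative_eq_intros)
  have "((\<lambda>s. f (z + s *\<^sub>R v)) has_derivative (\<lambda>h. ?f' (h *\<^sub>R v))) (at s0)"
    using has_derivative_compose[OF g f] by (simp add: o_def)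
  moreover have "(\<lambda>h. ?f' (h *\<^sub>R v)) = (\<lambda>h. ?f' v * h)"
    using linear_cmul[OF has_derivative_linear[OF f]] by (auto simp: mult.commute)
  ultimately show ?thesis by (simp add: has_field_derivative_def)
qed

lemma partial_eq:
  assumes "((\<lambda>t. f (x + t *\<^sub>R axis j 1)) has_real_derivative d) (at 0)"
  shows "partial f j x = d"
  using assms by (simp add: partial_def DERIV_imp_deriv)

lemma partial_frechet:
  fixes f :: "real^'n \<Rightarrow> real"
  assumes "f differentiable (at y)"
  shows "partial f k y = frechet_derivative f (at y) (axis k 1)"
  using line_has_deriv[of f y 0 "axis k 1"] assms by (intro partial_eq) simp

lemma line_has_partial:
  fixes f :: "real^'n \<Rightarrow> real"
  assumes "f differentiable (at (z + s *\<^sub>R axis k 1))"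
  shows "((\<lambda>s. f (z + s *\<^sub>R axis k 1)) has_real_derivative partial f k (z + s *\<^sub>R axis k 1)) (at s)"
  using line_has_deriv[OF assms] partial_frechet[OF assms] by simp

lemma partial_has:
  fixes f :: "real^'n \<Rightarrow> real"
  assumes "f differentiable (at x)"
  shows "((\<lambda>t. f (x + t *\<^sub>R axis k 1)) has_real_derivative partial f k x) (at 0)"
  using line_has_partial[of f x 0 k] assms by simp

lemma mvt_mixed:
  fixes f :: "real^'n \<Rightarrow> real"
  assumes X: "ball x r \<subseteq> X" and h: "0 < h" "2*h < r"
    and df: "\<forall>y\<in>X. f differentiable (at y)"
    and dpf: "\<forall>y\<in>X. partial f k differentiable (at y)"
  shows "\<exists>\<xi> \<eta>. 0 < \<xi> \<and> \<xi> < h \<and> 0 < \<eta> \<and> \<eta> < h \<and>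
     f (x + h *\<^sub>R axis k 1 + h *\<^sub>R axis l 1) - f (x + h *\<^sub>R axis k 1) - f (x + h *\<^sub>R axis l 1) + f x
       = h^2 * partial (partial f k) l (x + \<xi> *\<^sub>R axis k 1 + \<eta> *\<^sub>R axis l 1)"
proof -
  let ?ek = "axis k (1::real) :: real^'n" and ?el = "axis l (1::real) :: real^'n"
  have inX: "x + a *\<^sub>R ?ek + b *\<^sub>R ?el \<in> X" if "\<bar>a\<bar> \<le> h" "\<bar>b\<bar> \<le> h" for a b
  proof -
    have "norm (a *\<^sub>R ?ek + b *\<^sub>R ?el) \<le> norm (a *\<^sub>R ?ek) + norm (b *\<^sub>R ?el)" by (rule norm_triangle_ineq)
    also have "\<dots> \<le> 2*h" using that by simp
    finally have "norm (a *\<^sub>R ?ek + b *\<^sub>R ?el) < r" using h by simp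
    moreover have "norm (- (a *\<^sub>R ?ek) - b *\<^sub>R ?el) = norm (a *\<^sub>R ?ek + b *\<^sub>R ?el)"
      by (metis minus_add_distrib norm_minus_cancel diff_conv_add_uminus)
    ultimately have "dist x (x + a *\<^sub>R ?ek + b *\<^sub>R ?el) < r" by (simp add: dist_norm add.assoc)
    then show ?thesis using X by auto
  qed
  define \<phi> where "\<phi> s = f ((x + h *\<^sub>R ?el) + s *\<^sub>R ?ek) - f (x + s *\<^sub>R ?ek)" for s
  have "\<exists>z. 0 < z \<and> z < h \<and> \<phi> h - \<phi> 0 = (h - 0) *
      (partial f k ((x + h *\<^sub>R ?el) + z *\<^sub>R ?ek) - partial f k (x + z *\<^sub>R ?ek))"
  proof (rule MVT2)
    fix s assume s: "0 \<le> s" "s \<le> h"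
    have d1: "f differentiable (at ((x + h *\<^sub>R ?el) + s *\<^sub>R ?ek))"
      using df inX[of s h] s by (simp add: algebra_simps)
    have d2: "f differentiable (at (x + s *\<^sub>R ?ek))"
      using df inX[of s 0] s by simp
    show "(\<phi> has_real_derivative (partial f k ((x + h *\<^sub>R ?el) + s *\<^sub>R ?ek) - partial f k (x + s *\<^sub>R ?ek))) (at s)"
      unfolding \<phi>_def by (intro derivative_intros line_has_partial d1 d2)
  qed (use h in auto)
  then obtain \<xi> where xi: "0 < \<xi>" "\<xi> < h" and e1: "\<phi> h - \<phi> 0 = h *
      (partial f k ((x + \<xi> *\<^sub>R ?ek) + h *\<^sub>R ?el) - partial f k ((x + \<xi> *\<^sub>R ?ek) + 0 *\<^sub>R ?el))"
    by (auto simp: algebra_simps)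
  define \<psi> where "\<psi> t = partial f k ((x + \<xi> *\<^sub>R ?ek) + t *\<^sub>R ?el)" for t
  have "\<exists>z. 0 < z \<and> z < h \<and> \<psi> h - \<psi> 0 = (h - 0) * partial (partial f k) l ((x + \<xi> *\<^sub>R ?ek) + z *\<^sub>R ?el)"
  proof (rule MVT2)
    fix t assume t: "0 \<le> t" "t \<le> h"
    have "partial f k differentiable (at ((x + \<xi> *\<^sub>R ?ek) + t *\<^sub>R ?el))"
      using dpf inX[of \<xi> t] t xi by simp
    then show "(\<psi> has_real_derivative partial (partial f k) l ((x + \<xi> *\<^sub>R ?ek) + t *\<^sub>R ?el)) (at t)"
      unfolding \<psi>_def by (rule line_has_partial)
  qed (use h in auto)
  then obtain \<eta> where eta: "0 < \<eta>" "\<eta> < h" and e2: "\<psi> h - \<psi> 0 = h * partial (partial f k) l ((x + \<xi> *\<^sub>R ?ek) + \<eta> *\<^sub>R ?el)"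
    by auto
  have "f (x + h *\<^sub>R ?ek + h *\<^sub>R ?el) - f (x + h *\<^sub>R ?ek) - f (x + h *\<^sub>R ?el) + f x = \<phi> h - \<phi> 0"
    by (simp add: \<phi>_def algebra_simps)
  also have "\<dots> = h * (\<psi> h - \<psi> 0)" using e1 by (simp add: \<psi>_def)
  also have "\<dots> = h^2 * partial (partial f k) l (x + \<xi> *\<^sub>R ?ek + \<eta> *\<^sub>R ?el)"
    using e2 by (simp add: power2_eq_square)
  finally show ?thesis using xi eta by blast
qed

lemma near_pt:
  fixes x :: "real^'n"
  assumes "\<bar>a\<bar> < h" "\<bar>b\<bar> < h"
  shows "dist (x + a *\<^sub>R axis k 1 + b *\<^sub>R axis l 1) x < 2*h"
proof -
  have "norm (a *\<^sub>R axis k (1::real) + b *\<^sub>R axis l 1) \<le> norm (a *\<^sub>R axis k (1::real)) + norm (b *\<^sub>R axis l (1::real))"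
    by (rule norm_triangle_ineq)
  also have "\<dots> < 2*h" using assms by simp
  finally show ?thesis by (simp add: dist_norm add.assoc)
qed

lemma schwarz:
  fixes f :: "real^'n \<Rightarrow> real"
  assumes X: "open X" "x \<in> X"
    and df: "\<forall>y\<in>X. f differentiable (at y)"
    and dpk: "\<forall>y\<in>X. partial f k differentiable (at y)"
    and dpl: "\<forall>y\<in>X. partial f l differentiable (at y)"
    and ckl: "continuous_on X (partial (partial f k) l)"
    and clk: "continuous_on X (partial (partial f l) k)"
  shows "partial (partial f k) l x = partial (partial f l) k x"
proof (rule ccontr)
  let ?a = "partial (partial f k) l x" and ?b = "partial (partial f l) k x"
  assume ne: "?a \<noteq> ?b"
  define e where "e = \<bar>?a - ?b\<bar> / 2"
  have e: "e > 0" using ne by (simp add: e_def)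
  obtain r where r: "r > 0" "ball x r \<subseteq> X" using X open_contains_ball by blast
  obtain d1 where d1: "d1 > 0" "\<forall>y\<in>X. dist y x < d1 \<longrightarrow> dist (partial (partial f k) l y) ?a < e"
    using ckl X e unfolding continuous_on_iff by blast
  obtain d2 where d2: "d2 > 0" "\<forall>y\<in>X. dist y x < d2 \<longrightarrow> dist (partial (partial f l) k y) ?b < e"
    using clk X e unfolding continuous_on_iff by blast
  define h where "h = min r (min d1 d2) / 4"
  have h: "0 < h" "2*h < r" "2*h < d1" "2*h < d2" using r d1 d2 by (auto simp: h_def)
  obtain \<xi> \<eta> where p1: "0 < \<xi>" "\<xi> < h" "0 < \<eta>" "\<eta> < h" and E1:
     "f (x + h *\<^sub>R axis k 1 + h *\<^sub>R axis l 1) - f (x + h *\<^sub>R axis k 1) - f (x + h *\<^sub>R axis l 1) + f x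
       = h^2 * partial (partial f k) l (x + \<xi> *\<^sub>R axis k 1 + \<eta> *\<^sub>R axis l 1)"
    using mvt_mixed[OF r(2) h(1,2) df dpk] by blast
  obtain \<xi>' \<eta>' where p2: "0 < \<xi>'" "\<xi>' < h" "0 < \<eta>'" "\<eta>' < h" and E2:
     "f (x + h *\<^sub>R axis l 1 + h *\<^sub>R axis k 1) - f (x + h *\<^sub>R axis l 1) - f (x + h *\<^sub>R axis k 1) + f x
       = h^2 * partial (partial f l) k (x + \<xi>' *\<^sub>R axis l 1 + \<eta>' *\<^sub>R axis k 1)"
    using mvt_mixed[OF r(2) h(1,2) df dpl] by blast
  have "x + h *\<^sub>R axis l 1 + h *\<^sub>R axis k 1 = x + h *\<^sub>R axis k 1 + h *\<^sub>R axis l (1::real)"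
    by (simp add: algebra_simps)
  with E1 E2 have "h^2 * partial (partial f k) l (x + \<xi> *\<^sub>R axis k 1 + \<eta> *\<^sub>R axis l 1)
     = h^2 * partial (partial f l) k (x + \<xi>' *\<^sub>R axis l 1 + \<eta>' *\<^sub>R axis k 1)" by (simp add: algebra_simps)
  then have eq: "partial (partial f k) l (x + \<xi> *\<^sub>R axis k 1 + \<eta> *\<^sub>R axis l 1)
     = partial (partial f l) k (x + \<xi>' *\<^sub>R axis l 1 + \<eta>' *\<^sub>R axis k 1)" using h by simp
  have q1: "dist (x + \<xi> *\<^sub>R axis k 1 + \<eta> *\<^sub>R axis l 1) x < 2*h" using p1 by (intro near_pt) auto
  have q2: "dist (x + \<xi>' *\<^sub>R axis l 1 + \<eta>' *\<^sub>R axis k 1) x < 2*h" using p2 by (intro near_pt) auto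
  have m1: "x + \<xi> *\<^sub>R axis k 1 + \<eta> *\<^sub>R axis l 1 \<in> X" using q1 h r by (auto simp: dist_commute)
  have m2: "x + \<xi>' *\<^sub>R axis l 1 + \<eta>' *\<^sub>R axis k 1 \<in> X" using q2 h r by (auto simp: dist_commute)
  have "dist (partial (partial f k) l (x + \<xi> *\<^sub>R axis k 1 + \<eta> *\<^sub>R axis l 1)) ?a < e"
    using d1 m1 q1 h by auto
  moreover have "dist (partial (partial f l) k (x + \<xi>' *\<^sub>R axis l 1 + \<eta>' *\<^sub>R axis k 1)) ?b < e"
    using d2 m2 q2 h by auto
  moreover have aux: "\<And>p q a b::real. \<bar>p - a\<bar> < \<bar>a - b\<bar>/2 \<Longrightarrow> \<bar>q - b\<bar> < \<bar>a - b\<bar>/2 \<Longrightarrow> p = q \<Longrightarrow> False"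
    by (auto simp: abs_if split: if_splits)
  ultimately show False using eq unfolding dist_real_def e_def by metis
qed

definition MDER :: "(real \<Rightarrow> real^'n^'n) \<Rightarrow> real^'n^'n \<Rightarrow> bool" where
  "MDER M M' \<longleftrightarrow> (\<forall>a b. ((\<lambda>t. M t $ a $ b) has_real_derivative M' $ a $ b) (at 0))"

lemma matrix_inv_props:
  fixes A :: "real^'n^'n"
  assumes "invertible A"
  shows "A ** matrix_inv A = mat 1" "matrix_inv A ** A = mat 1"
proof -
  have "\<exists>A'. A ** A' = mat 1 \<and> A' ** A = mat 1" using assms invertible_def by blast
  then have "A ** matrix_inv A = mat 1 \<and> matrix_inv A ** A = mat 1"
    unfolding matrix_inv_def by (rule someI_ex)
  then show "A ** matrix_inv A = mat 1" "matrix_inv A ** A = mat 1" by auto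
qed

lemma matrix_inv_unique:
  fixes A B :: "real^'n^'n"
  assumes "A ** B = mat 1"
  shows "matrix_inv A = B"
proof -
  have inv: "invertible A" using assms invertible_right_inverse by blast
  have "matrix_inv A = matrix_inv A ** (A ** B)" using assms by simp
  also have "\<dots> = B" by (simp add: matrix_mul_assoc matrix_inv_props[OF inv])
  finally show ?thesis .
qed

lemma det_deriv:
  fixes M :: "real \<Rightarrow> real^'n^'n"
  assumes "MDER M M'"
  shows "((\<lambda>t. det (M t)) has_real_derivative
     (\<Sum>a\<in>UNIV. det (\<chi> i. if i = a then row a M' else row i (M 0)))) (at 0)"
proof -
  have d: "((\<lambda>t. det (M t)) has_real_derivative
     (\<Sum>p\<in>{p. p permutes (UNIV::'n set)}. of_int (sign p) *
        (\<Sum>i\<in>UNIV. M' $ i $ p i * (\<Prod>j\<in>UNIV-{i}. M 0 $ j $ p j)))) (at 0)"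
    unfolding det_def
    by (intro DERIV_sum DERIV_cmult has_field_derivative_prod assms[unfolded MDER_def, rule_format])
  have "(\<Sum>p\<in>{p. p permutes (UNIV::'n set)}. of_int (sign p) *
        (\<Sum>i\<in>UNIV. M' $ i $ p i * (\<Prod>j\<in>UNIV-{i}. M 0 $ j $ p j)))
      = (\<Sum>i\<in>UNIV. \<Sum>p\<in>{p. p permutes (UNIV::'n set)}. of_int (sign p) *
        (M' $ i $ p i * (\<Prod>j\<in>UNIV-{i}. M 0 $ j $ p j)))"
    by (simp add: sum_distrib_left sum.swap[of _ "{p. p permutes (UNIV::'n set)}"])
  also have "\<dots> = (\<Sum>a\<in>UNIV. det (\<chi> i. if i = a then row a M' else row i (M 0)))"
  proof (rule sum.cong[OF refl])
    fix a :: 'n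
    show "(\<Sum>p\<in>{p. p permutes UNIV}. of_int (sign p) *
        (M' $ a $ p a * (\<Prod>j\<in>UNIV-{a}. M 0 $ j $ p j))) = det (\<chi> i. if i = a then row a M' else row i (M 0))"
      unfolding det_def
    proof (rule sum.cong[OF refl])
      fix p :: "'n \<Rightarrow> 'n"
      have "(\<Prod>i\<in>UNIV. (\<chi> i. if i = a then row a M' else row i (M 0)) $ i $ p i)
          = (\<Prod>i\<in>UNIV. (if i = a then M' $ a $ p a else M 0 $ i $ p i))"
        by (rule prod.cong) (auto simp: row_def)
      also have "\<dots> = M' $ a $ p a * (\<Prod>j\<in>UNIV-{a}. M 0 $ j $ p j)"
        by (subst prod.remove[of UNIV a]) (auto intro!: prod.cong)
      finally show "of_int (sign p) * (M' $ a $ p a * (\<Prod>j\<in>UNIV-{a}. M 0 $ j $ p j)) =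
         of_int (sign p) * (\<Prod>i\<in>UNIV. (\<chi> i. if i = a then row a M' else row i (M 0)) $ i $ p i)"
        by simp
    qed
  qed
  finally show ?thesis using d by simp
qed

lemma det_deriv_trace:
  fixes M0 M' :: "real^'n^'n"
  assumes "invertible M0"
  shows "(\<Sum>a\<in>UNIV. det (\<chi> i. if i = a then row a M' else row i M0)) = det M0 * trace (M' ** matrix_inv M0)"
proof -
  let ?C = "M' ** matrix_inv M0"
  have CM: "?C ** M0 = M'" by (simp add: matrix_mul_assoc[symmetric] matrix_inv_props[OF assms])
  have rowa: "row a M' = (\<Sum>c\<in>UNIV. ?C $ a $ c *s row c M0)" for a
  proof -
    have "row a M' = row a (?C ** M0)" using CM by simp
    also have "\<dots> = (\<Sum>c\<in>UNIV. ?C $ a $ c *s row c M0)"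
      by (simp add: vec_eq_iff row_def matrix_matrix_mult_def sum_component)
    finally show ?thesis .
  qed
  have "det (\<chi> i. if i = a then row a M' else row i M0) = ?C $ a $ a * det M0" for a
  proof -
    have ra: "\<And>c. row a ?C $ c = ?C $ a $ c" by (simp add: row_def)
    have "det (\<chi> i. if i = a then row a M' else row i M0)
       = det (\<chi> i. if i = a then (\<Sum>c\<in>UNIV. (row a ?C) $ c *s row c M0) else row i M0)"
      by (rule arg_cong[where f=det], rule Cart_lambda_cong) (simp only: ra rowa[of a] if_cancel)
    also have "\<dots> = (row a ?C) $ a * det M0" by (rule cramer_lemma_transpose)
    finally show ?thesis by (simp add: row_def)
  qed
  then show ?thesis by (simp add: trace_def sum_distrib_left mult.commute)
qed

lemma matrix_mul_uminus_right: "(A::real^'n^'m) ** (- B) = - (A ** (B::real^'k^'n))"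
  by (simp add: vec_eq_iff matrix_matrix_mult_def sum_negf)

lemma matrix_mul_uminus_left: "(- A::real^'n^'m) ** B = - (A ** (B::real^'k^'n))"
  by (simp add: vec_eq_iff matrix_matrix_mult_def sum_negf)

lemma matrix_inv_cramer:
  fixes A :: "real^'n^'n"
  assumes "det A \<noteq> 0"
  shows "matrix_inv A $ a $ b = det (\<chi> i j. if j = a then axis b 1 $ i else A $ i $ j) / det A"
proof -
  have inv: "invertible A" using assms invertible_det_nz by blast
  have "A *v (matrix_inv A *v axis b 1) = axis b 1"
    by (simp add: matrix_vector_mul_assoc matrix_inv_props[OF inv])
  then have "matrix_inv A *v axis b 1 = (\<chi> k. det (\<chi> i j. if j = k then axis b 1 $ i else A $ i $ j) / det A)"
    using cramer[OF assms] by blast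
  then have "(matrix_inv A *v axis b 1) $ a = det (\<chi> i j. if j = a then axis b 1 $ i else A $ i $ j) / det A"
    by simp
  then show ?thesis by (simp add: matrix_vector_mult_basis column_def)
qed

lemma inv_deriv:
  fixes M :: "real \<Rightarrow> real^'n^'n"
  assumes der: "MDER M M'" and nz: "det (M 0) \<noteq> 0"
  shows "MDER (\<lambda>t. matrix_inv (M t)) (- (matrix_inv (M 0) ** M' ** matrix_inv (M 0)))"
proof -
  define N0 where "N0 = matrix_inv (M 0)"
  have inv0: "invertible (M 0)" using nz invertible_det_nz by blast
  have "isCont (\<lambda>t. det (M t)) 0" using det_deriv[OF der] by (rule DERIV_isCont)
  then obtain \<epsilon> where \<epsilon>: "\<epsilon> > 0" "\<forall>y. dist 0 y < \<epsilon> \<longrightarrow> det (M y) \<noteq> 0"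
    using continuous_at_avoid[of 0 "\<lambda>t. det (M t)" 0] nz by (auto simp: isCont_def continuous_at)
  have ev: "eventually (\<lambda>t. det (M t) \<noteq> 0) (nhds 0)"
    unfolding eventually_nhds_metric using \<epsilon> by (auto simp: dist_commute)
  have "\<exists>d. ((\<lambda>t. matrix_inv (M t) $ a $ b) has_real_derivative d) (at 0)" for a b
  proof -
    define P where "P t = (\<chi> i j. if j = a then axis b (1::real) $ i else M t $ i $ j)" for t
    have "MDER P (\<chi> i j. if j = a then 0 else M' $ i $ j)"
      unfolding MDER_def P_def using der[unfolded MDER_def] by (auto intro: DERIV_const)
    from det_deriv[OF this] obtain dn where dn: "((\<lambda>t. det (P t)) has_real_derivative dn) (at 0)" by blast
    obtain dd where dd: "((\<lambda>t. det (M t)) has_real_derivative dd) (at 0)" using det_deriv[OF der] by blast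
    have q: "((\<lambda>t. det (P t) / det (M t)) has_real_derivative
        (dn * det (M 0) - det (P 0) * dd) / (det (M 0) * det (M 0))) (at 0)"
      by (rule DERIV_divide[OF dn dd nz])
    have e: "eventually (\<lambda>t. matrix_inv (M t) $ a $ b = det (P t) / det (M t)) (nhds 0)"
      using ev by eventually_elim (simp add: matrix_inv_cramer P_def)
    show ?thesis
      using DERIV_cong_ev[OF refl e refl] q by blast
  qed
  then obtain Cd where Cd: "\<And>a b. ((\<lambda>t. matrix_inv (M t) $ a $ b) has_real_derivative Cd a b) (at 0)"
    by metis
  define Cdm where "Cdm = (\<chi> a b. Cd a b)"
  have Z: "(M' ** N0 + M 0 ** Cdm) $ a $ b = 0" for a b
  proof -
    have d1: "((\<lambda>t. \<Sum>c\<in>UNIV. M t $ a $ c * matrix_inv (M t) $ c $ b) has_real_derivative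
        (\<Sum>c\<in>UNIV. M' $ a $ c * matrix_inv (M 0) $ c $ b + Cd c b * M 0 $ a $ c)) (at 0)"
      by (intro DERIV_sum DERIV_mult Cd der[unfolded MDER_def, rule_format])
    have "eventually (\<lambda>t. (\<Sum>c\<in>UNIV. M t $ a $ c * matrix_inv (M t) $ c $ b) = mat 1 $ a $ b) (nhds 0)"
      using ev
    proof eventually_elim
      case (elim t)
      then have "M t ** matrix_inv (M t) = mat 1"
        using matrix_inv_props invertible_det_nz by blast
      then have "(M t ** matrix_inv (M t)) $ a $ b = mat 1 $ a $ b" by simp
      then show ?case by (simp only: matrix_matrix_mult_def vec_lambda_beta)
    qed
    then have d2: "((\<lambda>t. \<Sum>c\<in>UNIV. M t $ a $ c * matrix_inv (M t) $ c $ b) has_real_derivative 0) (at 0)"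
      by (subst DERIV_cong_ev[OF refl _ refl]) (assumption, rule DERIV_const)
    have "(\<Sum>c\<in>UNIV. M' $ a $ c * matrix_inv (M 0) $ c $ b + Cd c b * M 0 $ a $ c) = 0"
      by (rule DERIV_unique[OF d1 d2])
    then show ?thesis
      by (simp add: matrix_matrix_mult_def Cdm_def N0_def sum.distrib mult.commute)
  qed
  have Z': "M 0 ** Cdm = - (M' ** N0)"
    using Z by (simp add: vec_eq_iff eq_neg_iff_add_eq_0 add.commute)
  have "Cdm = N0 ** (M 0 ** Cdm)"
    by (simp add: matrix_mul_assoc N0_def matrix_inv_props[OF inv0])
  also have "\<dots> = - (N0 ** M' ** N0)"
    by (simp add: Z' matrix_mul_uminus_right matrix_mul_assoc)
  finally show ?thesis
    unfolding MDER_def using Cd by (simp add: Cdm_def N0_def vec_eq_iff)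
qed

lemma key_algebra:
  fixes a b :: "'n::finite \<Rightarrow> 'n \<Rightarrow> real" and g :: "'n \<Rightarrow> 'n \<Rightarrow> 'n \<Rightarrow> real" and f :: "'n \<Rightarrow> real"
  assumes BA: "\<And>p q. (\<Sum>l\<in>UNIV. b p l * a l q) = (if p = q then 1 else 0)"
    and AB: "\<And>p q. (\<Sum>l\<in>UNIV. a p l * b l q) = (if p = q then 1 else 0)"
    and curl: "\<And>k l i. g k l i - g l k i = \<alpha> * (f k * a l i - f l * a k i)"
    and dv: "\<And>i. (\<Sum>k\<in>UNIV. g k k i) = (\<alpha> - 1) * (\<Sum>k\<in>UNIV. f k * a k i)"
  shows "(\<Sum>k\<in>UNIV. (\<Sum>p\<in>UNIV. \<Sum>l\<in>UNIV. b p l * g k l p) * b j k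
            - (\<Sum>l\<in>UNIV. \<Sum>p\<in>UNIV. b j l * g k l p * b p k)
            - (\<Sum>m\<in>UNIV. g k k m * (\<Sum>q\<in>UNIV. b m q * b j q)))
         = ((real CARD('n) - 2) * \<alpha> + 1) * (\<Sum>k\<in>UNIV. b j k * f k)"
proof -
  let ?BF = "\<Sum>k\<in>UNIV. b j k * f k"
  have T3: "(\<Sum>k\<in>UNIV. \<Sum>m\<in>UNIV. g k k m * (\<Sum>q\<in>UNIV. b m q * b j q)) = (\<alpha> - 1) * ?BF"
  proof -
    have "(\<Sum>k\<in>UNIV. \<Sum>m\<in>UNIV. g k k m * (\<Sum>q\<in>UNIV. b m q * b j q))
        = (\<Sum>m\<in>UNIV. \<Sum>k\<in>UNIV. g k k m * (\<Sum>q\<in>UNIV. b m q * b j q))"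
      by (rule sum.swap)
    also have "\<dots> = (\<Sum>m\<in>UNIV. (\<Sum>k\<in>UNIV. g k k m) * (\<Sum>q\<in>UNIV. b m q * b j q))"
      by (simp only: sum_distrib_right)
    also have "\<dots> = (\<Sum>m\<in>UNIV. (\<alpha> - 1) * ((\<Sum>k\<in>UNIV. f k * a k m) * (\<Sum>q\<in>UNIV. b m q * b j q)))"
      by (simp only: dv mult.assoc)
    also have "\<dots> = (\<alpha> - 1) * (\<Sum>m\<in>UNIV. (\<Sum>k\<in>UNIV. f k * a k m) * (\<Sum>q\<in>UNIV. b m q * b j q))"
      by (simp only: sum_distrib_left)
    also have "(\<Sum>m\<in>UNIV. (\<Sum>k\<in>UNIV. f k * a k m) * (\<Sum>q\<in>UNIV. b m q * b j q))
        = (\<Sum>m\<in>UNIV. \<Sum>k\<in>UNIV. \<Sum>q\<in>UNIV. f k * a k m * (b m q * b j q))"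
      by (simp only: sum_product)
    also have "\<dots> = (\<Sum>k\<in>UNIV. \<Sum>m\<in>UNIV. \<Sum>q\<in>UNIV. f k * a k m * (b m q * b j q))"
      by (rule sum.swap)
    also have "\<dots> = (\<Sum>k\<in>UNIV. \<Sum>q\<in>UNIV. \<Sum>m\<in>UNIV. f k * a k m * (b m q * b j q))"
      by (rule sum.cong[OF refl], rule sum.swap)
    also have "\<dots> = (\<Sum>k\<in>UNIV. \<Sum>q\<in>UNIV. f k * b j q * (\<Sum>m\<in>UNIV. a k m * b m q))"
      by (simp add: sum_distrib_left mult_ac)
    also have "\<dots> = (\<Sum>k\<in>UNIV. \<Sum>q\<in>UNIV. if q = k then f k * b j k else 0)"
      by (rule sum.cong[OF refl], rule sum.cong[OF refl]) (simp add: AB)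
    also have "\<dots> = ?BF"
      by (simp add: mult.commute)
    finally show ?thesis .
  qed
  have T12: "(\<Sum>k\<in>UNIV. (\<Sum>p\<in>UNIV. \<Sum>l\<in>UNIV. b p l * g k l p) * b j k)
          - (\<Sum>k\<in>UNIV. \<Sum>l\<in>UNIV. \<Sum>p\<in>UNIV. b j l * g k l p * b p k)
        = \<alpha> * (real CARD('n) - 1) * ?BF"
  proof -
    have e2: "(\<Sum>k\<in>UNIV. \<Sum>l\<in>UNIV. \<Sum>p\<in>UNIV. b j l * g k l p * b p k)
        = (\<Sum>k\<in>UNIV. \<Sum>l\<in>UNIV. \<Sum>p\<in>UNIV. b p l * b j k * g l k p)"
      by (rule trans[OF sum.swap]) (simp add: mult_ac)
    have e1: "(\<Sum>k\<in>UNIV. (\<Sum>p\<in>UNIV. \<Sum>l\<in>UNIV. b p l * g k l p) * b j k)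
        = (\<Sum>k\<in>UNIV. \<Sum>l\<in>UNIV. \<Sum>p\<in>UNIV. b p l * b j k * g k l p)"
    proof (rule sum.cong[OF refl])
      fix k
      have "(\<Sum>p\<in>UNIV. \<Sum>l\<in>UNIV. b p l * g k l p) * b j k = (\<Sum>p\<in>UNIV. \<Sum>l\<in>UNIV. b p l * g k l p * b j k)"
        by (simp only: sum_distrib_right)
      also have "\<dots> = (\<Sum>l\<in>UNIV. \<Sum>p\<in>UNIV. b p l * g k l p * b j k)" by (rule sum.swap)
      also have "\<dots> = (\<Sum>l\<in>UNIV. \<Sum>p\<in>UNIV. b p l * b j k * g k l p)" by (simp add: mult_ac)
      finally show "(\<Sum>p\<in>UNIV. \<Sum>l\<in>UNIV. b p l * g k l p) * b j k = (\<Sum>l\<in>UNIV. \<Sum>p\<in>UNIV. b p l * b j k * g k l p)" .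
    qed
    have pt: "b p l * b j k * (g k l p - g l k p) = \<alpha> * (b p l * b j k * f k * a l p) - \<alpha> * (b p l * b j k * f l * a k p)" for k l p
      by (subst curl) (simp add: algebra_simps)
    have "(\<Sum>k\<in>UNIV. \<Sum>l\<in>UNIV. \<Sum>p\<in>UNIV. b p l * b j k * g k l p)
        - (\<Sum>k\<in>UNIV. \<Sum>l\<in>UNIV. \<Sum>p\<in>UNIV. b p l * b j k * g l k p)
        = (\<Sum>k\<in>UNIV. \<Sum>l\<in>UNIV. \<Sum>p\<in>UNIV. b p l * b j k * (g k l p - g l k p))"
      by (simp only: sum_subtractf right_diff_distrib)
    also have "\<dots> = \<alpha> * (\<Sum>k\<in>UNIV. \<Sum>l\<in>UNIV. \<Sum>p\<in>UNIV. b p l * b j k * f k * a l p)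
                 - \<alpha> * (\<Sum>k\<in>UNIV. \<Sum>l\<in>UNIV. \<Sum>p\<in>UNIV. b p l * b j k * f l * a k p)"
      by (simp only: pt sum_subtractf sum_distrib_left)
    also have "(\<Sum>k\<in>UNIV. \<Sum>l\<in>UNIV. \<Sum>p\<in>UNIV. b p l * b j k * f k * a l p)
        = (\<Sum>k\<in>UNIV. b j k * f k * (\<Sum>p\<in>UNIV. \<Sum>l\<in>UNIV. b p l * a l p))"
    proof (rule sum.cong[OF refl])
      fix k
      have "(\<Sum>l\<in>UNIV. \<Sum>p\<in>UNIV. b p l * b j k * f k * a l p) = (\<Sum>p\<in>UNIV. \<Sum>l\<in>UNIV. b p l * b j k * f k * a l p)"
        by (rule sum.swap)
      also have "\<dots> = b j k * f k * (\<Sum>p\<in>UNIV. \<Sum>l\<in>UNIV. b p l * a l p)"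
        by (simp add: sum_distrib_left mult_ac)
      finally show "(\<Sum>l\<in>UNIV. \<Sum>p\<in>UNIV. b p l * b j k * f k * a l p) = b j k * f k * (\<Sum>p\<in>UNIV. \<Sum>l\<in>UNIV. b p l * a l p)" .
    qed
    also have "\<dots> = real CARD('n) * ?BF"
    proof -
      have bpp: "\<And>p. (\<Sum>l\<in>UNIV. b p l * a l p) = 1" by (simp add: BA)
      show ?thesis by (simp only: bpp) (simp add: sum_distrib_left mult_ac)
    qed
    also have "(\<Sum>k\<in>UNIV. \<Sum>l\<in>UNIV. \<Sum>p\<in>UNIV. b p l * b j k * f l * a k p)
        = (\<Sum>k\<in>UNIV. \<Sum>p\<in>UNIV. \<Sum>l\<in>UNIV. b p l * b j k * f l * a k p)"
      by (rule sum.cong[OF refl], rule sum.swap)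
    also have "\<dots> = (\<Sum>p\<in>UNIV. \<Sum>k\<in>UNIV. \<Sum>l\<in>UNIV. b p l * b j k * f l * a k p)"
      by (rule sum.swap)
    also have "\<dots> = (\<Sum>p\<in>UNIV. (\<Sum>k\<in>UNIV. b j k * a k p) * (\<Sum>l\<in>UNIV. b p l * f l))"
      by (simp only: sum_product) (simp add: mult_ac)
    also have "\<dots> = (\<Sum>p\<in>UNIV. if j = p then (\<Sum>l\<in>UNIV. b p l * f l) else 0)"
      by (rule sum.cong[OF refl]) (simp only: BA, simp)
    also have "\<dots> = ?BF"
      by simp
    finally show ?thesis using e1 e2 by (simp add: algebra_simps)
  qed
  have "(\<Sum>k\<in>UNIV. (\<Sum>p\<in>UNIV. \<Sum>l\<in>UNIV. b p l * g k l p) * b j k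
            - (\<Sum>l\<in>UNIV. \<Sum>p\<in>UNIV. b j l * g k l p * b p k)
            - (\<Sum>m\<in>UNIV. g k k m * (\<Sum>q\<in>UNIV. b m q * b j q)))
      = (\<Sum>k\<in>UNIV. (\<Sum>p\<in>UNIV. \<Sum>l\<in>UNIV. b p l * g k l p) * b j k)
          - (\<Sum>k\<in>UNIV. \<Sum>l\<in>UNIV. \<Sum>p\<in>UNIV. b j l * g k l p * b p k)
          - (\<Sum>k\<in>UNIV. \<Sum>m\<in>UNIV. g k k m * (\<Sum>q\<in>UNIV. b m q * b j q))"
    by (simp only: sum_subtractf)
  also have "\<dots> = ((real CARD('n) - 2) * \<alpha> + 1) * ?BF"
    unfolding T12 T3 by (simp add: algebra_simps)
  finally show ?thesis .
qed

lemma matrix_add_rdistrib': "((A::real^'n^'m) + B) ** (C::real^'k^'n) = A ** C + B ** C"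
  by (simp add: vec_eq_iff matrix_matrix_mult_def sum.distrib distrib_right)

lemma trace_transpose': "trace (transpose (A::real^'n^'n)) = trace A"
  by (simp add: trace_def transpose_def)

lemma MDER_transpose:
  assumes "MDER M M'"
  shows "MDER (\<lambda>t. transpose (M t)) (transpose M')"
  using assms by (simp add: MDER_def transpose_def)

lemma MDER_mult:
  assumes "MDER M M'" "MDER P P'"
  shows "MDER (\<lambda>t. M t ** P t) (M' ** P 0 + M 0 ** P')"
  unfolding MDER_def
proof (intro allI)
  fix a b
  have "((\<lambda>t. \<Sum>c\<in>UNIV. M t $ a $ c * P t $ c $ b) has_real_derivative
      (\<Sum>c\<in>UNIV. M' $ a $ c * P 0 $ c $ b + P' $ c $ b * M 0 $ a $ c)) (at 0)"
    by (intro DERIV_sum DERIV_mult assms[unfolded MDER_def, rule_format])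
  then show "((\<lambda>t. (M t ** P t) $ a $ b) has_real_derivative (M' ** P 0 + M 0 ** P') $ a $ b) (at 0)"
    by (simp add: matrix_matrix_mult_def sum.distrib mult.commute)
qed

lemma trace_identity:
  fixes A G :: "real^'n^'n"
  assumes inv: "invertible A"
  defines "B \<equiv> matrix_inv A"
  shows "trace ((transpose G ** A + transpose A ** G) ** (B ** transpose B)) = 2 * trace (B ** G)"
proof -
  have AB: "A ** B = mat 1" "B ** A = mat 1" using matrix_inv_props[OF inv] by (auto simp: B_def)
  have t1: "trace (transpose G ** A ** (B ** transpose B)) = trace (B ** G)"
  proof -
    have "transpose G ** A ** (B ** transpose B) = transpose G ** (A ** B) ** transpose B"
      by (simp add: matrix_mul_assoc)
    also have "\<dots> = transpose (B ** G)" by (simp add: AB matrix_transpose_mul)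
    finally show ?thesis by (simp add: trace_transpose')
  qed
  have t2: "trace (transpose A ** G ** (B ** transpose B)) = trace (B ** G)"
  proof -
    have "trace (transpose A ** G ** (B ** transpose B)) = trace (transpose A ** (G ** B ** transpose B))"
      by (simp add: matrix_mul_assoc)
    also have "\<dots> = trace (G ** B ** transpose B ** transpose A)" by (rule trace_mul_sym)
    also have "G ** B ** transpose B ** transpose A = G ** B ** transpose (A ** B)"
      by (simp add: matrix_mul_assoc matrix_transpose_mul)
    also have "\<dots> = G ** B" by (simp add: AB)
    also have "trace (G ** B) = trace (B ** G)" by (rule trace_mul_sym)
    finally show ?thesis .
  qed
  show ?thesis using t1 t2 by (simp add: matrix_add_rdistrib' trace_add)
qed

lemma inv_identity:
  fixes A G :: "real^'n^'n"
  assumes inv: "invertible A"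
  defines "B \<equiv> matrix_inv A"
  shows "A ** ((B ** transpose B) ** (transpose G ** A + transpose A ** G) ** (B ** transpose B))
      = transpose (B ** G ** B) + G ** (B ** transpose B)"
proof -
  have AB: "A ** B = mat 1" "B ** A = mat 1" using matrix_inv_props[OF inv] by (auto simp: B_def)
  have tAB: "transpose B ** transpose A = mat 1"
    using AB by (metis matrix_transpose_mul transpose_mat)
  have "A ** ((B ** transpose B) ** (transpose G ** A + transpose A ** G) ** (B ** transpose B))
      = (A ** B) ** transpose B ** (transpose G ** A + transpose A ** G) ** (B ** transpose B)"
    by (simp add: matrix_mul_assoc)
  also have "\<dots> = transpose B ** (transpose G ** A + transpose A ** G) ** (B ** transpose B)"
    by (simp add: AB)
  also have "\<dots> = transpose B ** transpose G ** (A ** B) ** transpose B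
        + (transpose B ** transpose A) ** G ** (B ** transpose B)"
    by (simp add: matrix_add_ldistrib matrix_add_rdistrib' matrix_mul_assoc)
  also have "\<dots> = transpose (B ** G ** B) + G ** (B ** transpose B)"
    by (simp add: AB tAB matrix_transpose_mul matrix_mul_assoc)
  finally show ?thesis .
qed

lemma inv_HtH:
  fixes A :: "real^'n^'n"
  assumes inv: "invertible A"
  shows "matrix_inv (transpose A ** A) = matrix_inv A ** transpose (matrix_inv A)"
proof (rule matrix_inv_unique)
  have AB: "A ** matrix_inv A = mat 1" "matrix_inv A ** A = mat 1" using matrix_inv_props[OF inv] by auto
  have "transpose A ** A ** (matrix_inv A ** transpose (matrix_inv A)) = transpose A ** (A ** matrix_inv A) ** transpose (matrix_inv A)"
    by (simp add: matrix_mul_assoc)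
  also have "\<dots> = transpose A ** transpose (matrix_inv A)" by (simp add: AB)
  also have "\<dots> = transpose (matrix_inv A ** A)" by (simp only: matrix_transpose_mul)
  also have "\<dots> = mat 1" by (simp add: AB)
  finally show "transpose A ** A ** (matrix_inv A ** transpose (matrix_inv A)) = mat 1" .
qed

theorem lemma2p2:
  fixes X \<Omega> :: "(real^'n) set"
    and \<alpha> c0 :: real
    and \<sigma> :: "real^'n \<Rightarrow> real"
    and u :: "'n \<Rightarrow> real^'n \<Rightarrow> real"
    and S :: "'n \<Rightarrow> real^'n \<Rightarrow> real^'n"
    and H :: "real^'n \<Rightarrow> real^'n^'n"
    and D :: "real^'n \<Rightarrow> real"
  assumes n2: "CARD('n) \<ge> 2"
    and X: "open X" "convex X" "bounded X"
    and alpha: "(real CARD('n) - 2) * \<alpha> + 1 \<noteq> 0"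
    and sigma_pos: "\<forall>x\<in>X. \<sigma> x > 0"
    and sigma_smooth: "Ck 2 \<sigma> X"
    and u_smooth: "\<forall>i. Ck 2 (u i) X"
    and u_sol: "\<forall>i. \<forall>x\<in>X. divergence (\<lambda>y. \<sigma> y *\<^sub>R grad (u i) y) x = 0"
    and S_def: "\<forall>i x. S i x = (\<sigma> x powr \<alpha>) *\<^sub>R grad (u i) x"
    and Omega: "open \<Omega>" "\<Omega> \<subseteq> X"
    and c0: "c0 > 0" "\<forall>x\<in>\<Omega>. det (\<chi> k i. S i x $ k) \<ge> c0"
    and H_def: "\<forall>x. H x = (\<chi> i j. S i x \<bullet> S j x)"
    and D_def: "\<forall>x. D x = sqrt (det (H x))"
    and x: "x \<in> \<Omega>"
  shows "(grad (\<lambda>y. ln (\<sigma> y)) x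
           = (1 / ((real CARD('n) - 2) * \<alpha> + 1) / D x) *\<^sub>R
               (\<Sum>i\<in>UNIV. \<Sum>j\<in>UNIV.
                  (grad (\<lambda>y. D y * matrix_inv (H y) $ i $ j) x \<bullet> S i x) *\<^sub>R S j x)) \<and>
         (grad (\<lambda>y. ln (\<sigma> y)) x
           = (1 / ((real CARD('n) - 2) * \<alpha> + 1)) *\<^sub>R
               (grad (\<lambda>y. ln (D y)) x +
                (\<Sum>i\<in>UNIV. \<Sum>j\<in>UNIV.
                  (grad (\<lambda>y. matrix_inv (H y) $ i $ j) x \<bullet> S i x) *\<^sub>R S j x)))"
proof -
  define c where "c = (real CARD('n) - 2) * \<alpha> + 1"
  have cnz: "c \<noteq> 0" using alpha by (simp add: c_def)
  have xX: "x \<in> X" using Omega x by auto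
  have "Ck (Suc (Suc 0)) \<sigma> X" using sigma_smooth by (simp add: numeral_2_eq_2)
  then have sdiff: "\<forall>y\<in>X. \<sigma> differentiable (at y)" by simp
  have uCk: "(\<forall>y\<in>X. u i differentiable (at y)) \<and> (\<forall>j. (\<forall>y\<in>X. partial (u i) j differentiable (at y))
      \<and> (\<forall>l. continuous_on X (partial (partial (u i) j) l)))" for i
  proof -
    have "Ck (Suc (Suc 0)) (u i) X" using u_smooth by (simp add: numeral_2_eq_2)
    then show ?thesis by simp
  qed
  define \<sigma>0 where "\<sigma>0 = \<sigma> x"
  have s0: "\<sigma>0 > 0" using sigma_pos xX by (simp add: \<sigma>0_def)
  define sd where "sd k = partial \<sigma> k x" for k
  have dsig: "((\<lambda>t. \<sigma> (x + t *\<^sub>R axis k 1)) has_real_derivative sd k) (at 0)" for k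
    unfolding sd_def using sdiff xX by (intro partial_has) auto
  define w where "w l i = partial (u i) l x" for l i
  define W where "W k l i = partial (partial (u i) l) k x" for k l i
  have dw: "((\<lambda>t. partial (u i) l (x + t *\<^sub>R axis k 1)) has_real_derivative W k l i) (at 0)" for k l i
    unfolding W_def using uCk xX by (intro partial_has) auto
  have Sc: "\<And>i y l. S i y $ l = \<sigma> y powr \<alpha> * partial (u i) l y" using S_def by (simp add: grad_def)
  define F where "F k = sd k / \<sigma>0" for k
  define A0 where "A0 = (\<chi> l i. S i x $ l)"
  define Ak where "Ak k t = (\<chi> l i. S i (x + t *\<^sub>R axis k 1) $ l)" for k t
  define G where "G k = (\<chi> l i. \<alpha> * \<sigma>0 powr (\<alpha> - 1) * sd k * w l i + \<sigma>0 powr \<alpha> * W k l i)" for k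
  have Ak0: "Ak k 0 = A0" for k by (simp add: Ak_def A0_def)
  have A0e: "A0 $ l $ i = \<sigma>0 powr \<alpha> * w l i" for l i by (simp add: A0_def Sc \<sigma>0_def w_def)
  have MA: "MDER (Ak k) (G k)" for k
    unfolding MDER_def
  proof (intro allI)
    fix a b
    have pos: "\<sigma> (x + 0 *\<^sub>R axis k 1) > 0" using s0 by (simp add: \<sigma>0_def)
    have "((\<lambda>t. \<sigma> (x + t *\<^sub>R axis k 1) powr \<alpha> * partial (u b) a (x + t *\<^sub>R axis k 1)) has_real_derivative
        \<alpha> * \<sigma> (x + 0 *\<^sub>R axis k 1) powr (\<alpha> - of_nat 1) * sd k * partial (u b) a (x + 0 *\<^sub>R axis k 1)
          + W k a b * \<sigma> (x + 0 *\<^sub>R axis k 1) powr \<alpha>) (at 0)"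
      by (rule DERIV_mult[OF DERIV_fun_powr[OF dsig pos] dw])
    then show "((\<lambda>t. Ak k t $ a $ b) has_real_derivative G k $ a $ b) (at 0)"
      by (simp add: Ak_def G_def Sc \<sigma>0_def w_def mult_ac)
  qed
  have Hk: "H (x + t *\<^sub>R axis k 1) = transpose (Ak k t) ** Ak k t" for k t
    using H_def by (simp add: vec_eq_iff matrix_matrix_mult_def transpose_def Ak_def inner_vec_def)
  define H' where "H' k = transpose (G k) ** A0 + transpose A0 ** G k" for k
  have MH: "MDER (\<lambda>t. H (x + t *\<^sub>R axis k 1)) (H' k)" for k
    using MDER_mult[OF MDER_transpose[OF MA] MA, of k k] Hk Ak0 by (simp add: H'_def)
  have H0: "H x = transpose A0 ** A0"
    using H_def by (simp add: vec_eq_iff matrix_matrix_mult_def transpose_def A0_def inner_vec_def)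
  have detApos: "det A0 > 0"
  proof -
    have "c0 \<le> det A0" using c0(2) x unfolding A0_def by blast
    then show ?thesis using c0(1) by linarith
  qed
  have invA: "invertible A0" using detApos invertible_det_nz by force
  define B where "B = matrix_inv A0"
  have AB: "A0 ** B = mat 1" "B ** A0 = mat 1" using matrix_inv_props[OF invA] by (auto simp: B_def)
  have detH: "det (H x) = (det A0)^2" by (simp add: H0 det_mul power2_eq_square)
  have D0: "D x = det A0" using D_def detH detApos by simp
  have D0pos: "D x > 0" using D0 detApos by simp
  define N where "N = matrix_inv (H x)"
  have N: "N = B ** transpose B" by (simp add: N_def H0 inv_HtH[OF invA] B_def)
  have detHnz: "det (H x) \<noteq> 0" using detH detApos by simp
  have invH: "invertible (H x)" using detHnz invertible_det_nz by blast
  have z: "\<And>k. x + (0::real) *\<^sub>R axis k (1::real) = x" by simp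
  have DHx: "det (H x) = D x ^ 2" using detH D0 by simp
  have sHx: "sqrt (det (H x)) = D x" using D_def by simp
  have dD: "((\<lambda>t. D (x + t *\<^sub>R axis k 1)) has_real_derivative D x * trace (B ** G k)) (at 0)" for k
  proof -
    have dd: "((\<lambda>t. det (H (x + t *\<^sub>R axis k 1))) has_real_derivative det (H x) * trace (H' k ** N)) (at 0)"
      using det_deriv[OF MH[of k], unfolded z] det_deriv_trace[OF invH, of "H' k"] by (simp add: N_def)
    have pos: "0 < det (H (x + 0 *\<^sub>R axis k 1))" using detH detApos by simp
    have tr: "trace (H' k ** N) = 2 * trace (B ** G k)"
      using trace_identity[OF invA, of "G k"] by (simp add: H'_def N B_def)
    have "((\<lambda>t. sqrt (det (H (x + t *\<^sub>R axis k 1)))) has_real_derivative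
        inverse (sqrt (det (H (x + 0 *\<^sub>R axis k 1)))) / 2 * (det (H x) * trace (H' k ** N))) (at 0)"
      by (rule DERIV_chain2[OF DERIV_real_sqrt[OF pos] dd])
    moreover have "inverse (sqrt (det (H (x + 0 *\<^sub>R axis k 1)))) / 2 * (det (H x) * trace (H' k ** N))
        = D x * trace (B ** G k)"
      using D0pos by (simp add: sHx DHx tr field_simps power2_eq_square)
    ultimately have "((\<lambda>t. sqrt (det (H (x + t *\<^sub>R axis k 1)))) has_real_derivative D x * trace (B ** G k)) (at 0)"
      by simp
    moreover have "(\<lambda>t. D (x + t *\<^sub>R axis k 1)) = (\<lambda>t. sqrt (det (H (x + t *\<^sub>R axis k 1))))"
      using D_def by simp
    ultimately show ?thesis by simp
  qed
  have dN: "((\<lambda>t. matrix_inv (H (x + t *\<^sub>R axis k 1)) $ i $ j) has_real_derivative (- (N ** H' k ** N)) $ i $ j) (at 0)" for k i j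
    using inv_deriv[OF MH] detHnz by (simp add: MDER_def N_def)
  have P1: "partial (\<lambda>y. D y * matrix_inv (H y) $ i $ j) k x
      = D x * (trace (B ** G k) * N $ i $ j + (- (N ** H' k ** N)) $ i $ j)" for k i j
    by (intro partial_eq, rule DERIV_cong[OF DERIV_mult[OF dD dN]]) (simp add: N_def algebra_simps)
  have P2: "partial (\<lambda>y. matrix_inv (H y) $ i $ j) k x = (- (N ** H' k ** N)) $ i $ j" for k i j
    by (rule partial_eq[OF dN])
  have P3: "partial (\<lambda>y. ln (D y)) k x = trace (B ** G k)" for k
  proof -
    have pos: "0 < D (x + 0 *\<^sub>R axis k 1)" using D0pos by simp
    show ?thesis
      by (intro partial_eq, rule DERIV_cong[OF DERIV_chain2[OF DERIV_ln[OF pos] dD]]) (use D0pos in simp)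
  qed
  have PF: "partial (\<lambda>y. ln (\<sigma> y)) k x = F k" for k
  proof -
    have pos: "0 < \<sigma> (x + 0 *\<^sub>R axis k 1)" using s0 by (simp add: \<sigma>0_def)
    show ?thesis
      by (intro partial_eq, rule DERIV_cong[OF DERIV_chain2[OF DERIV_ln[OF pos] dsig]]) (simp add: F_def \<sigma>0_def divide_inverse mult.commute)
  qed
  have schw: "W k l i = W l k i" for k l i
    unfolding W_def using uCk[of i] by (intro schwarz[OF X(1) xX]) auto
  have divpde: "(\<Sum>j\<in>UNIV. sd j * w j i + W j j i * \<sigma>0) = 0" for i
  proof -
    have pj: "partial (\<lambda>y. (\<sigma> y *\<^sub>R grad (u i) y) $ j) j x = sd j * w j i + W j j i * \<sigma>0" for j
    proof -
      have eqf: "(\<lambda>y. (\<sigma> y *\<^sub>R grad (u i) y) $ j) = (\<lambda>y. \<sigma> y * partial (u i) j y)"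
        by (simp add: grad_def)
      show ?thesis unfolding eqf
        by (intro partial_eq, rule DERIV_cong[OF DERIV_mult[OF dsig dw]]) (simp add: w_def \<sigma>0_def)
    qed
    have "divergence (\<lambda>y. \<sigma> y *\<^sub>R grad (u i) y) x = 0" using u_sol xX by blast
    then show ?thesis unfolding divergence_def pj .
  qed
  have pw: "\<sigma>0 powr \<alpha> = \<sigma>0 powr (\<alpha> - 1) * \<sigma>0" using s0 by (simp add: powr_diff)
  have curl: "G k $ l $ i - G l $ k $ i = \<alpha> * (F k * A0 $ l $ i - F l * A0 $ k $ i)" for k l i
    using s0 by (simp add: G_def A0e F_def schw[of k l i] pw field_simps)
  have dv: "(\<Sum>k\<in>UNIV. G k $ k $ i) = (\<alpha> - 1) * (\<Sum>k\<in>UNIV. F k * A0 $ k $ i)" for i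
  proof -
    define S1 where "S1 = (\<Sum>k\<in>UNIV. sd k * w k i)"
    define S2 where "S2 = (\<Sum>k\<in>UNIV. W k k i)"
    have sW: "S2 * \<sigma>0 = - S1"
      using divpde[of i] by (simp add: S1_def S2_def sum.distrib sum_distrib_right eq_neg_iff_add_eq_0 add.commute)
    have L: "(\<Sum>k\<in>UNIV. G k $ k $ i) = \<alpha> * \<sigma>0 powr (\<alpha> - 1) * S1 + \<sigma>0 powr \<alpha> * S2"
      by (simp add: G_def S1_def S2_def sum.distrib sum_distrib_left mult_ac)
    have R: "(\<Sum>k\<in>UNIV. F k * A0 $ k $ i) = \<sigma>0 powr (\<alpha> - 1) * S1"
      unfolding S1_def sum_distrib_left
      by (rule sum.cong[OF refl]) (use s0 in \<open>simp add: F_def A0e pw field_simps\<close>)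
    have "\<sigma>0 powr \<alpha> * S2 = \<sigma>0 powr (\<alpha> - 1) * (S2 * \<sigma>0)" by (simp add: pw mult_ac)
    also have "\<dots> = - (\<sigma>0 powr (\<alpha> - 1) * S1)" using sW by simp
    finally show ?thesis unfolding L R by (simp add: algebra_simps)
  qed
  have BA: "(\<Sum>l\<in>UNIV. B $ p $ l * A0 $ l $ q) = (if p = q then 1 else 0)" for p q
    using AB(2) by (simp add: vec_eq_iff matrix_matrix_mult_def mat_def)
  have ABs: "(\<Sum>l\<in>UNIV. A0 $ p $ l * B $ l $ q) = (if p = q then 1 else 0)" for p q
    using AB(1) by (simp add: vec_eq_iff matrix_matrix_mult_def mat_def)
  note key = key_algebra[where a="\<lambda>p q. A0 $ p $ q" and b="\<lambda>p q. B $ p $ q" and g="\<lambda>k l p. G k $ l $ p" and f=F and \<alpha>=\<alpha>, OF BA ABs curl dv]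
  define tr where "tr k = trace (B ** G k)" for k
  define Fv where "Fv = (\<chi> k. F k)"
  define trv where "trv = (\<chi> k. tr k)"
  define Y where "Y k = transpose (B ** G k ** B) + G k ** (B ** transpose B)" for k
  have AN: "A0 ** N = transpose B" by (simp add: N matrix_mul_assoc AB)
  have ANHN: "A0 ** (N ** H' k ** N) = Y k" for k
    using inv_identity[OF invA, of "G k"] by (simp add: N B_def H'_def Y_def)
  have Qj: "(\<Sum>k\<in>UNIV. tr k * B $ j $ k - Y k $ k $ j) = c * (B *v Fv) $ j" for j
  proof -
    have t: "tr k = (\<Sum>p\<in>UNIV. \<Sum>l\<in>UNIV. B $ p $ l * G k $ l $ p)" for k
      by (simp add: tr_def trace_def matrix_matrix_mult_def)
    have y1: "transpose (B ** G k ** B) $ k $ j = (\<Sum>l\<in>UNIV. \<Sum>p\<in>UNIV. B $ j $ l * G k $ l $ p * B $ p $ k)" for k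
    proof -
      have "transpose (B ** G k ** B) $ k $ j = (\<Sum>p\<in>UNIV. (\<Sum>l\<in>UNIV. B $ j $ l * G k $ l $ p) * B $ p $ k)"
        by (simp add: transpose_def matrix_matrix_mult_def)
      also have "\<dots> = (\<Sum>p\<in>UNIV. \<Sum>l\<in>UNIV. B $ j $ l * G k $ l $ p * B $ p $ k)"
        by (simp only: sum_distrib_right)
      also have "\<dots> = (\<Sum>l\<in>UNIV. \<Sum>p\<in>UNIV. B $ j $ l * G k $ l $ p * B $ p $ k)"
        by (rule sum.swap)
      finally show ?thesis .
    qed
    have y2: "(G k ** (B ** transpose B)) $ k $ j = (\<Sum>m\<in>UNIV. G k $ k $ m * (\<Sum>q\<in>UNIV. B $ m $ q * B $ j $ q))" for k
      by (simp add: matrix_matrix_mult_def transpose_def)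
    have "(\<Sum>k\<in>UNIV. tr k * B $ j $ k - Y k $ k $ j)
       = (\<Sum>k\<in>UNIV. (\<Sum>p\<in>UNIV. \<Sum>l\<in>UNIV. B $ p $ l * G k $ l $ p) * B $ j $ k
            - (\<Sum>l\<in>UNIV. \<Sum>p\<in>UNIV. B $ j $ l * G k $ l $ p * B $ p $ k)
            - (\<Sum>m\<in>UNIV. G k $ k $ m * (\<Sum>q\<in>UNIV. B $ m $ q * B $ j $ q)))"
      by (rule sum.cong[OF refl]) (simp only: Y_def vector_add_component y1 y2 t diff_diff_eq)
    also have "\<dots> = c * (\<Sum>k\<in>UNIV. B $ j $ k * F k)"
      unfolding c_def by (rule key)
    also have "\<dots> = c * (B *v Fv) $ j"
      by (simp add: matrix_vector_mult_def Fv_def)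
    finally show ?thesis .
  qed
  have hh: "(\<Sum>i\<in>UNIV. \<Sum>k\<in>UNIV. (a k * N $ i $ j + Z k $ i $ j) * A0 $ k $ i)
      = (\<Sum>k\<in>UNIV. a k * (A0 ** N) $ k $ j + (A0 ** Z k) $ k $ j)" for a Z j
    by (subst sum.swap, rule sum.cong[OF refl])
      (simp add: matrix_matrix_mult_def sum_distrib_left sum.distrib distrib_left distrib_right mult_ac)
  have gS: "\<And>f i. grad f x \<bullet> S i x = (\<Sum>k\<in>UNIV. partial f k x * A0 $ k $ i)"
    by (simp add: inner_vec_def grad_def A0_def)
  have vecsum: "\<And>v. (\<Sum>j\<in>UNIV. v j *\<^sub>R S j x) = A0 *v (\<chi> j. v j)"
    by (simp add: vec_eq_iff matrix_vector_mult_def A0_def sum_component mult.commute)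
  have swapsum: "\<And>a. (\<Sum>i\<in>UNIV. \<Sum>j\<in>UNIV. a i j *\<^sub>R S j x) = (\<Sum>j\<in>UNIV. (\<Sum>i\<in>UNIV. a i j) *\<^sub>R S j x)"
    by (subst sum.swap) (simp add: scaleR_sum_left)
  have V1: "(\<Sum>i\<in>UNIV. grad (\<lambda>y. D y * matrix_inv (H y) $ i $ j) x \<bullet> S i x) = D x * c * (B *v Fv) $ j" for j
  proof -
    have "(\<Sum>i\<in>UNIV. grad (\<lambda>y. D y * matrix_inv (H y) $ i $ j) x \<bullet> S i x)
        = D x * (\<Sum>i\<in>UNIV. \<Sum>k\<in>UNIV. (tr k * N $ i $ j + (- (N ** H' k ** N)) $ i $ j) * A0 $ k $ i)"
      by (simp add: gS P1 tr_def sum_distrib_left mult_ac)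
    also have "\<dots> = D x * (\<Sum>k\<in>UNIV. tr k * B $ j $ k - Y k $ k $ j)"
      by (simp only: hh) (simp add: AN ANHN matrix_mul_uminus_right transpose_def)
    finally show ?thesis using Qj by simp
  qed
  have V2: "(\<Sum>i\<in>UNIV. grad (\<lambda>y. matrix_inv (H y) $ i $ j) x \<bullet> S i x) = c * (B *v Fv) $ j - (B *v trv) $ j" for j
  proof -
    have "(\<Sum>i\<in>UNIV. grad (\<lambda>y. matrix_inv (H y) $ i $ j) x \<bullet> S i x)
        = (\<Sum>i\<in>UNIV. \<Sum>k\<in>UNIV. (0 * N $ i $ j + (- (N ** H' k ** N)) $ i $ j) * A0 $ k $ i)"
      by (simp add: gS P2)
    also have "\<dots> = - (\<Sum>k\<in>UNIV. Y k $ k $ j)"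
      by (simp only: hh) (simp add: ANHN matrix_mul_uminus_right sum_negf)
    also have "\<dots> = c * (B *v Fv) $ j - (B *v trv) $ j"
      using Qj[of j] by (simp add: sum_subtractf matrix_vector_mult_def trv_def mult.commute)
    finally show ?thesis .
  qed
  have gl: "grad (\<lambda>y. ln (\<sigma> y)) x = Fv" by (simp add: vec_eq_iff grad_def PF Fv_def)
  have gD: "grad (\<lambda>y. ln (D y)) x = trv" by (simp add: vec_eq_iff grad_def P3 trv_def tr_def)
  have ABv: "A0 *v (B *v v) = v" for v by (simp add: matrix_vector_mul_assoc AB)
  have E1: "(\<Sum>i\<in>UNIV. \<Sum>j\<in>UNIV. (grad (\<lambda>y. D y * matrix_inv (H y) $ i $ j) x \<bullet> S i x) *\<^sub>R S j x)
      = (D x * c) *\<^sub>R Fv"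
  proof -
    have "(\<chi> j. D x * c * (B *v Fv) $ j) = (D x * c) *\<^sub>R (B *v Fv)" by (simp add: vec_eq_iff)
    then show ?thesis by (subst swapsum, simp only: V1 vecsum) (simp add: matrix_vector_mult_scaleR ABv)
  qed
  have E2: "(\<Sum>i\<in>UNIV. \<Sum>j\<in>UNIV. (grad (\<lambda>y. matrix_inv (H y) $ i $ j) x \<bullet> S i x) *\<^sub>R S j x)
      = c *\<^sub>R Fv - trv"
  proof -
    have "(\<chi> j. c * (B *v Fv) $ j - (B *v trv) $ j) = c *\<^sub>R (B *v Fv) - B *v trv" by (simp add: vec_eq_iff)
    then show ?thesis by (subst swapsum, simp only: V2 vecsum) (simp add: matrix_vector_mult_scaleR matrix_vector_mult_diff_distrib ABv)
  qed
  show ?thesis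
  proof
    show "grad (\<lambda>y. ln (\<sigma> y)) x = (1 / ((real CARD('n) - 2) * \<alpha> + 1) / D x) *\<^sub>R
        (\<Sum>i\<in>UNIV. \<Sum>j\<in>UNIV. (grad (\<lambda>y. D y * matrix_inv (H y) $ i $ j) x \<bullet> S i x) *\<^sub>R S j x)"
      unfolding E1 gl c_def[symmetric] using cnz D0pos by simp
    show "grad (\<lambda>y. ln (\<sigma> y)) x = (1 / ((real CARD('n) - 2) * \<alpha> + 1)) *\<^sub>R
        (grad (\<lambda>y. ln (D y)) x + (\<Sum>i\<in>UNIV. \<Sum>j\<in>UNIV. (grad (\<lambda>y. matrix_inv (H y) $ i $ j) x \<bullet> S i x) *\<^sub>R S j x))"
      unfolding E2 gl gD c_def[symmetric] using cnz by simp
  qed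
qed

end
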